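(* For the toy interacting scalar field, the interacting SDR is $i_{\mathrm{int}}=$ inclusion of constants $\mathbb C[[\hbar]]\to\mathbb C[[x,\xi]][[\hbar]]$, $p_{\mathrm{int}}(O)=\langle e^{\frac{\mathrm{i}}{\hbar}P}O\rangle/\langle e^{\frac{\mathrm{i}}{\hbar}P}\rangle$ (perturbative expectation value of $O(x)$ w.r.t. $S$), $K_{\mathrm{int}}(\xi f(x))=0$, and its classical limit is $$K^{\mathrm{cl}}_{\mathrm{int}}(O)=\xi\,\frac{O(x)-O(0)}{S'(x)}=\xi\,\frac{O(x)-O(0)}{x+P'(x)}\qquad (O=O(x)\in\mathbb C[[x]]),$$ the quotient being understood as a formal power series.
   Context: Toy scalar field: $\mathcal F=\mathbb R\oplus\mathbb R[-1]$ with even coordinate $x$ (degree $0$) and odd coordinate $\xi$ (degree $-1$), $\omega=\delta x\wedge\delta\xi$, $\Delta=\partial_x\partial_\xi$, $\mathcal F'=0$, differential $d$ such that $S_0=\frac{x^2}{2}$, chain contraction $\kappa$ with $\hat\kappa=\xi\partial_x$. Action $S(x)=\frac{x^2}{2}+P(x)$ with $P(x)=\sum_{n\ge3}\frac{P_n}{n!}x^n$ a polynomial; $S'$ denotes the derivative in $x$. BV differential $Q_\hbar=S'(x)\partial_\xi-\mathrm{i}\hbar\partial_x\partial_\xi$ on $\mathbb C[[x,\xi]][[\hbar]]$. Free classical SDR: $i$ = inclusion of constants, $p$ = constant term, $K=\nu\hat\kappa$ (so $K(x^N)=x^{N-1}\xi$ for $N\ge1$, $K(1)=0$, $K(\xi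 f)=0$). $(i_{\mathrm{int}},p_{\mathrm{int}},K_{\mathrm{int}})$ is obtained by the homological perturbation lemma from $(i,p,K)$ with perturbation $\delta=P'(x)\partial_\xi-\mathrm{i}\hbar\partial_x\partial_\xi$, i.e. $K_{\mathrm{int}}=\sum_kK(-\delta K)^k$ etc. The Gaussian average $\langle F\rangle=(e^{\frac{\mathrm{i}\hbar}{2}\partial_x^2}F)|_{x=0}$. $K^{\mathrm{cl}}_{\mathrm{int}}$ denotes $K_{\mathrm{int}}$ modulo $\hbar$. *)

theory Defs
  imports "HOL-Computational_Algebra.Computational_Algebra" "HOL-Computational_Algebra.Polynomial_FPS"
begin

(* An element of C[[x,xi]][[hbar]] (xi odd, xi^2 = 0) is a + xi * b with
   a, b in C[[x,hbar]].  We represent C[[x,hbar]] as complex fps fps: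
   the outer fps variable is x, the inner one is hbar.  The pair (a, b)
   stands for a + xi * b. *)
type_synonym sfield = "complex fps fps \<times> complex fps fps"

definition xser :: "complex fps \<Rightarrow> complex fps fps" where
  "xser Ob = Abs_fps (\<lambda>n. fps_const (Ob $ n))"

definition xpoly :: "complex poly \<Rightarrow> complex fps fps" where
  "xpoly p = xser (fps_of_poly p)"

definition ihbar :: "complex fps fps" where
  "ihbar = fps_const (fps_const \<i> * fps_X)"

(* free SDR: K = nu hat kappa, p = constant term, i = inclusion of constants *)
definition Kop :: "sfield \<Rightarrow> sfield" where
  "Kop v = (0, fps_shift 1 (fst v))"

definition pop :: "sfield \<Rightarrow> complex fps" where
  "pop v = fst v $ 0"

definition iop :: "complex fps \<Rightarrow> sfield" where
  "iop c = (fps_const c, 0)"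

(* perturbation delta = P'(x) d_xi - i hbar d_x d_xi ; d_xi (a + xi b) = b *)
definition delta :: "complex poly \<Rightarrow> sfield \<Rightarrow> sfield" where
  "delta P v = (xpoly (pderiv P) * snd v - ihbar * fps_deriv (snd v), 0)"

definition mdK :: "complex poly \<Rightarrow> sfield \<Rightarrow> sfield" where
  "mdK P w = (let u = delta P (Kop w) in (- fst u, - snd u))"

definition mKd :: "complex poly \<Rightarrow> sfield \<Rightarrow> sfield" where
  "mKd P w = (let u = Kop (delta P w) in (- fst u, - snd u))"

definition summable1 :: "(nat \<Rightarrow> complex fps) \<Rightarrow> bool" where
  "summable1 a \<longleftrightarrow> (\<forall>m. finite {k. a k $ m \<noteq> 0})"

definition fsum1 :: "(nat \<Rightarrow> complex fps) \<Rightarrow> complex fps" where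
  "fsum1 a = Abs_fps (\<lambda>m. \<Sum>k | a k $ m \<noteq> 0. a k $ m)"

definition summable2 :: "(nat \<Rightarrow> complex fps fps) \<Rightarrow> bool" where
  "summable2 a \<longleftrightarrow> (\<forall>n m. finite {k. a k $ n $ m \<noteq> 0})"

definition fsum2 :: "(nat \<Rightarrow> complex fps fps) \<Rightarrow> complex fps fps" where
  "fsum2 a = Abs_fps (\<lambda>n. Abs_fps (\<lambda>m. \<Sum>k | a k $ n $ m \<noteq> 0. a k $ n $ m))"

definition sf_summable :: "(nat \<Rightarrow> sfield) \<Rightarrow> bool" where
  "sf_summable a \<longleftrightarrow> summable2 (\<lambda>k. fst (a k)) \<and> summable2 (\<lambda>k. snd (a k))"

definition sf_sum :: "(nat \<Rightarrow> sfield) \<Rightarrow> sfield" where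
  "sf_sum a = (fsum2 (\<lambda>k. fst (a k)), fsum2 (\<lambda>k. snd (a k)))"

(* homological perturbation series:
   K_int = sum_k K (-delta K)^k,  p_int = sum_k p (-delta K)^k,
   i_int = sum_k (-K delta)^k i *)
definition Kint_series :: "complex poly \<Rightarrow> sfield \<Rightarrow> nat \<Rightarrow> sfield" where
  "Kint_series P v k = Kop ((mdK P ^^ k) v)"

definition pint_series :: "complex poly \<Rightarrow> sfield \<Rightarrow> nat \<Rightarrow> complex fps" where
  "pint_series P v k = pop ((mdK P ^^ k) v)"

definition iint_series :: "complex poly \<Rightarrow> complex fps \<Rightarrow> nat \<Rightarrow> sfield" where
  "iint_series P c k = (mKd P ^^ k) (iop c)"

definition mod_hbar :: "complex fps fps \<Rightarrow> complex fps" where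
  "mod_hbar f = Abs_fps (\<lambda>n. f $ n $ 0)"

(* Gaussian average of G(x) in C[[x]]: (exp(i hbar/2 d_x^2) G)|_{x=0} as a series in hbar;
   <x^(2r)> = (i hbar/2)^r (2r)!/r! *)
definition gauss :: "complex fps \<Rightarrow> complex fps" where
  "gauss G = Abs_fps (\<lambda>r. G $ (2*r) * (\<i>/2)^r * fact (2*r) / fact r)"

(* <exp(i P/hbar) Ob> = sum_j i^j/j! hbar^(-j) <P^j Ob>, as a Laurent series in hbar:
   contribution of the j-th term to the coefficient of hbar^m (m :: int) *)
definition gexp_term :: "complex poly \<Rightarrow> complex fps \<Rightarrow> nat \<Rightarrow> int \<Rightarrow> complex" where
  "gexp_term P Ob j m = (if m + int j \<ge> 0
     then \<i>^j / fact j * (gauss (fps_of_poly P ^ j * Ob) $ nat (m + int j)) else 0)"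

definition gexp_summable :: "complex poly \<Rightarrow> complex fps \<Rightarrow> bool" where
  "gexp_summable P Ob \<longleftrightarrow> (\<forall>m. finite {j. gexp_term P Ob j m \<noteq> 0})"

definition gexp_coeff :: "complex poly \<Rightarrow> complex fps \<Rightarrow> int \<Rightarrow> complex" where
  "gexp_coeff P Ob m = (\<Sum>j | gexp_term P Ob j m \<noteq> 0. gexp_term P Ob j m)"

definition gexp_avg :: "complex poly \<Rightarrow> complex fps \<Rightarrow> complex fps" where
  "gexp_avg P Ob = Abs_fps (\<lambda>m. gexp_coeff P Ob (int m))"

end

theory Submission
  imports Defs
begin


lemma mzb:
  fixes F G :: "'a::comm_semiring_0 fps"
  assumes "\<forall>k<a. F$k = 0" "\<forall>k<b. G$k = 0" "n < a + b"
  shows "(F*G)$n = 0"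
  unfolding fps_mult_nth
proof (intro sum.neutral ballI)
  fix i assume "i \<in> {0..n}"
  show "F $ i * G $ (n - i) = 0"
  proof (cases "i < a")
    case True then show ?thesis using assms by simp
  next
    case False then have "n - i < b" using assms(3) \<open>i \<in> {0..n}\<close> by auto
    then show ?thesis using assms by simp
  qed
qed

lemma pzb:
  fixes F :: "'a::comm_semiring_1 fps"
  assumes "\<forall>k<a. F$k = 0"
  shows "n < a * j \<Longrightarrow> (F^j)$n = 0"
proof (induction j arbitrary: n)
  case 0 then show ?case by simp
next
  case (Suc j)
  have "\<forall>k<a*j. (F^j)$k = 0" using Suc.IH by blast
  then show ?case using mzb[OF assms, where b="a*j" and n=n] Suc.prems by simp
qed

lemma Pf_low:
  assumes "\<forall>k<3. coeff P k = 0"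
  shows "\<forall>k<3. fps_of_poly P $ k = 0"
  using assms by simp

lemma Pd_low:
  assumes "\<forall>k<3. coeff (P::complex poly) k = 0"
  shows "\<forall>k<2. fps_of_poly (pderiv P) $ k = 0"
  using assms by (auto simp: coeff_pderiv)

lemma gauss_nth: "gauss G $ r = G$(2*r) * (\<i>/2)^r * fact (2*r) / fact r"
  by (simp add: gauss_def)

lemma gauss_add: "gauss (F + G) = gauss F + gauss G"
  by (rule fps_ext) (simp add: gauss_nth algebra_simps add_divide_distrib)
lemma gauss_minus: "gauss (- F) = - gauss F"
  by (rule fps_ext) (simp add: gauss_nth)
lemma gauss_diff: "gauss (F - G) = gauss F - gauss G"
  by (rule fps_ext) (simp add: gauss_nth algebra_simps diff_divide_distrib)
lemma gauss_const: "gauss (fps_const c * F) = fps_const c * gauss F"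
  by (rule fps_ext) (simp add: gauss_nth)
lemma gauss_zero: "gauss 0 = 0"
  by (rule fps_ext) (simp add: gauss_nth)

lemma gauss_vanish:
  assumes P3: "\<forall>k<3. coeff P k = 0" and "2*u < 3*j"
  shows "gauss (fps_of_poly P ^ j * G) $ u = 0"
proof -
  have "\<forall>k<3*j. (fps_of_poly P ^ j) $ k = 0"
    using pzb[OF Pf_low[OF P3]] by blast
  then have "(fps_of_poly P ^ j * G) $ (2*u) = 0"
    using mzb[where a="3*j" and b=0] assms(2) by simp
  then show ?thesis by (simp add: gauss_nth)
qed

lemma gexp_term_zero:
  assumes P3: "\<forall>k<3. coeff P k = 0" and "int j > 2*m"
  shows "gexp_term P G j m = 0"
proof (cases "m + int j \<ge> 0")
  case True
  have "2 * nat (m + int j) < 3*j" using True assms(2) by linarith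
  then show ?thesis using gauss_vanish[OF P3] True by (simp add: gexp_term_def)
qed (simp add: gexp_term_def)

definition Esum :: "complex poly \<Rightarrow> nat \<Rightarrow> complex fps \<Rightarrow> nat \<Rightarrow> complex" where
  "Esum P J G t = (\<Sum>j\<le>J. \<i>^j / fact j * gauss (fps_of_poly P ^ j * G) $ (t + j))"

lemma gexp_avg_Esum:
  assumes P3: "\<forall>k<3. coeff P k = 0" and "2*t \<le> J"
  shows "gexp_avg P G $ t = Esum P J G t"
proof -
  have sub: "{j. gexp_term P G j (int t) \<noteq> 0} \<subseteq> {..J}"
    using gexp_term_zero[OF P3, where G=G and m="int t"] assms(2) by (force simp: not_le)
  have "gexp_avg P G $ t = (\<Sum>j | gexp_term P G j (int t) \<noteq> 0. gexp_term P G j (int t))"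
    by (simp add: gexp_avg_def gexp_coeff_def)
  also have "\<dots> = (\<Sum>j\<le>J. gexp_term P G j (int t))"
    by (rule sum.mono_neutral_left) (use sub in auto)
  also have "\<dots> = Esum P J G t"
    unfolding Esum_def gexp_term_def by (intro sum.cong) (auto simp: nat_add_distrib)
  finally show ?thesis .
qed

lemma Esum_add: "Esum P J (F + G) t = Esum P J F t + Esum P J G t"
  by (simp add: Esum_def distrib_left gauss_add sum.distrib)
lemma Esum_minus: "Esum P J (- F) t = - Esum P J F t"
  by (simp add: Esum_def gauss_minus sum_negf)
lemma Esum_const: "Esum P J (fps_const c * F) t = c * Esum P J F t"
  by (simp add: Esum_def gauss_const sum_distrib_left mult.left_commute)

lemma gexp_avg_add: "\<forall>k<3. coeff P k = 0 \<Longrightarrow> gexp_avg P (F + G) = gexp_avg P F + gexp_avg P G"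
proof (rule fps_ext)
  fix n assume P3: "\<forall>k<3. coeff P k = 0"
  show "gexp_avg P (F + G) $ n = (gexp_avg P F + gexp_avg P G) $ n"
    using gexp_avg_Esum[OF P3, where J="2*n"] by (simp add: Esum_add)
qed
lemma gexp_avg_minus: "\<forall>k<3. coeff P k = 0 \<Longrightarrow> gexp_avg P (- F) = - gexp_avg P F"
proof (rule fps_ext)
  fix n assume P3: "\<forall>k<3. coeff P k = 0"
  show "gexp_avg P (- F) $ n = (- gexp_avg P F) $ n"
    using gexp_avg_Esum[OF P3, where J="2*n"] by (simp add: Esum_minus)
qed
lemma gexp_avg_diff: "\<forall>k<3. coeff P k = 0 \<Longrightarrow> gexp_avg P (F - G) = gexp_avg P F - gexp_avg P G"
  using gexp_avg_add[of P F "-G"] gexp_avg_minus[of P G] by simp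
lemma gexp_avg_const: "\<forall>k<3. coeff P k = 0 \<Longrightarrow> gexp_avg P (fps_const c * F) = fps_const c * gexp_avg P F"
proof (rule fps_ext)
  fix n assume P3: "\<forall>k<3. coeff P k = 0"
  show "gexp_avg P (fps_const c * F) $ n = (fps_const c * gexp_avg P F) $ n"
    using gexp_avg_Esum[OF P3, where J="2*n"] by (simp add: Esum_const)
qed
lemma gexp_avg_zero: "\<forall>k<3. coeff P k = 0 \<Longrightarrow> gexp_avg P 0 = 0"
  using gexp_avg_minus[of P 0] by simp



lemma gauss_X0: "gauss (fps_X * G) $ 0 = 0"
  by (simp add: gauss_nth)

lemma fact2: "(fact (2 * Suc u) :: complex) = of_nat (2*u+2) * of_nat (2*u+1) * fact (2*u)"
proof -
  have "2 * Suc u = Suc (Suc (2*u))" by simp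
  then show ?thesis by (simp only: fact_Suc) (simp add: algebra_simps)
qed

lemma gauss_XS: "gauss (fps_X * G) $ Suc u = \<i> * gauss (fps_deriv G) $ u"
proof -
  have e: "2 * Suc u - Suc 0 = Suc (2*u)" by simp
  have f1: "(fact (Suc u) :: complex) = of_nat (Suc u) * fact u" by simp
  have "gauss (fps_X * G) $ Suc u = G $ (2*u+1) * (\<i>/2)^(Suc u) * fact (2 * Suc u) / fact (Suc u)"
    by (simp add: gauss_nth e del: mult_Suc_right)
  also have "\<dots> = G $ (2*u+1) * (\<i>/2)^(Suc u) * (of_nat (2*u+2) * of_nat (2*u+1) * fact (2*u)) / (of_nat (Suc u) * fact u)"
    by (simp only: fact2 f1)
  also have "\<dots> = \<i> * ((of_nat (2*u+1) * G $ (2*u+1)) * (\<i>/2)^u * fact (2*u) / fact u)"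
  proof -
    have gen: "\<And>(s::complex) m f fu g. s \<noteq> 0 \<Longrightarrow> fu \<noteq> 0 \<Longrightarrow>
       g * (\<i>/2)^(Suc u) * ((2*s) * m * f) / (s * fu) = \<i> * ((m * g) * (\<i>/2)^u * f / fu)"
      by (simp add: field_simps)
    have "(of_nat (2*u+2)::complex) = 2 * of_nat (Suc u)" by simp
    then show ?thesis using gen[of "of_nat (Suc u)" "fact u"] by (simp del: of_nat_Suc of_nat_add)
  qed
  also have "\<dots> = \<i> * gauss (fps_deriv G) $ u"
    by (simp add: gauss_nth add.commute)
  finally show ?thesis .
qed

lemma cc_rel: "\<i> * (\<i>^Suc j / fact (Suc j) * of_nat (Suc j)) = - (\<i>^j / fact j :: complex)"
proof -
  have "(fact (Suc j) :: complex) = of_nat (Suc j) * fact j" by simp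
  moreover have "\<i> * \<i>^Suc j = - (\<i>^j :: complex)" by (simp add: power_Suc)
  ultimately show ?thesis by (simp add: field_simps del: of_nat_Suc)
qed

lemma deriv_Pj:
  "fps_deriv (fps_of_poly P ^ j * h) =
     fps_const (of_nat j) * (fps_of_poly P ^ (j - 1) * (fps_of_poly (pderiv P) * h))
     + fps_of_poly P ^ j * fps_deriv h"
  by (simp add: fps_deriv_power fps_of_poly_pderiv algebra_simps)

lemma gauss_vanish_d:
  assumes P3: "\<forall>k<3. coeff P k = 0" and "2*u < 3*j + 2"
  shows "gauss (fps_of_poly P ^ j * (fps_of_poly (pderiv P) * h)) $ u = 0"
proof -
  have a: "\<forall>k<3*j. (fps_of_poly P ^ j) $ k = 0"
    using pzb[OF Pf_low[OF P3]] by blast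
  have b: "\<forall>k<2. (fps_of_poly (pderiv P) * h) $ k = 0"
    using mzb[OF Pd_low[OF P3], where b=0] by simp
  have "(fps_of_poly P ^ j * (fps_of_poly (pderiv P) * h)) $ (2*u) = 0"
    using mzb[OF a b] assms(2) by simp
  then show ?thesis by (simp add: gauss_nth)
qed

lemma ibp:
  assumes P3: "\<forall>k<3. coeff P k = 0"
  shows "gexp_avg P ((fps_X + fps_of_poly (pderiv P)) * h) $ t =
     (if t = 0 then 0 else \<i> * gexp_avg P (fps_deriv h) $ (t - 1))"
proof (cases t)
  case 0
  have "gexp_avg P ((fps_X + fps_of_poly (pderiv P)) * h) $ 0
      = Esum P 0 ((fps_X + fps_of_poly (pderiv P)) * h) 0"
    by (rule gexp_avg_Esum[OF P3]) simp
  also have "\<dots> = 0" using Pd_low[OF P3] by (simp add: Esum_def gauss_nth)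
  finally show ?thesis using 0 by simp
next
  case (Suc t')
  define Pf where "Pf = fps_of_poly P"
  define Pd where "Pd = fps_of_poly (pderiv P)"
  define K where "K = Suc (2*t')"
  have tK: "2*t = Suc K" using Suc K_def by simp
  have EX: "gexp_avg P (fps_X * h) $ t = Esum P (Suc K) (fps_X * h) t"
    by (rule gexp_avg_Esum[OF P3]) (simp add: tK)
  have ED: "gexp_avg P (Pd * h) $ t = Esum P (Suc K) (Pd * h) t"
    by (rule gexp_avg_Esum[OF P3]) (simp add: tK)
  have EDh: "gexp_avg P (fps_deriv h) $ t' = Esum P (Suc K) (fps_deriv h) t'"
    by (rule gexp_avg_Esum[OF P3]) (simp add: K_def)
  have trm: "\<i>^j / fact j * gauss (Pf ^ j * (fps_X * h)) $ (t + j)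
     = \<i> * (\<i>^j / fact j * of_nat j * gauss (Pf ^ (j - 1) * (Pd * h)) $ (t' + j))
       + \<i> * (\<i>^j / fact j * gauss (Pf ^ j * fps_deriv h) $ (t' + j))" for j
  proof -
    have e: "Pf ^ j * (fps_X * h) = fps_X * (Pf ^ j * h)" by (simp add: algebra_simps)
    have "gauss (Pf ^ j * (fps_X * h)) $ (t + j) = \<i> * gauss (fps_deriv (Pf ^ j * h)) $ (t' + j)"
      unfolding e using gauss_XS[of "Pf ^ j * h" "t' + j"] Suc by (simp del: fps_deriv_mult)
    also have "\<dots> = \<i> * (of_nat j * gauss (Pf ^ (j - 1) * (Pd * h)) $ (t' + j)
        + gauss (Pf ^ j * fps_deriv h) $ (t' + j))"
      unfolding Pf_def Pd_def deriv_Pj by (simp add: gauss_add gauss_const)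
    finally show ?thesis by (simp add: algebra_simps)
  qed
  have "Esum P (Suc K) (fps_X * h) t =
      \<i> * (\<Sum>j\<le>Suc K. \<i>^j / fact j * of_nat j * gauss (Pf ^ (j - 1) * (Pd * h)) $ (t' + j))
      + \<i> * Esum P (Suc K) (fps_deriv h) t'"
    unfolding Esum_def Pf_def[symmetric] trm by (simp only: sum.distrib sum_distrib_left)
  also have "(\<Sum>j\<le>Suc K. \<i>^j / fact j * of_nat j * gauss (Pf ^ (j - 1) * (Pd * h)) $ (t' + j))
      = (\<Sum>j\<le>K. \<i>^Suc j / fact (Suc j) * of_nat (Suc j) * gauss (Pf ^ j * (Pd * h)) $ (t + j))"
    by (subst sum.atMost_Suc_shift) (simp add: Suc del: of_nat_Suc)
  also have "\<i> * \<dots> = - (\<Sum>j\<le>K. \<i>^j / fact j * gauss (Pf ^ j * (Pd * h)) $ (t + j))"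
    by (simp add: sum_distrib_left cc_rel sum_negf mult.assoc[symmetric] del: of_nat_Suc)
  also have "(\<Sum>j\<le>K. \<i>^j / fact j * gauss (Pf ^ j * (Pd * h)) $ (t + j)) = Esum P (Suc K) (Pd * h) t"
  proof -
    have "gauss (Pf ^ Suc K * (Pd * h)) $ (t + Suc K) = 0"
      unfolding Pf_def Pd_def by (rule gauss_vanish_d[OF P3]) (use tK in simp)
    then show ?thesis by (simp add: Esum_def Pf_def)
  qed
  finally have "gexp_avg P (fps_X * h) $ t = - gexp_avg P (Pd * h) $ t + \<i> * gexp_avg P (fps_deriv h) $ t'"
    using EX ED EDh by simp
  then show ?thesis
    using gexp_avg_add[OF P3, of "fps_X * h" "Pd * h"] Suc by (simp add: Pd_def distrib_right)
qed



definition col :: "complex fps fps \<Rightarrow> nat \<Rightarrow> complex fps" where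
  "col F s = Abs_fps (\<lambda>n. F $ n $ s)"

lemma col_nth [simp]: "col F s $ n = F $ n $ s" by (simp add: col_def)

lemma col_add: "col (F + G) s = col F s + col G s" by (rule fps_ext) simp
lemma col_minus: "col (- F) s = - col F s" by (rule fps_ext) simp
lemma col_diff: "col (F - G) s = col F s - col G s" by (rule fps_ext) simp
lemma col_zero: "col 0 s = 0" by (rule fps_ext) simp

lemma col_xpoly: "col (xpoly p * G) s = fps_of_poly p * col G s"
proof (rule fps_ext)
  fix n
  have "(xpoly p * G) $ n = (\<Sum>i=0..n. fps_const (coeff p i) * G $ (n-i))"
    unfolding fps_mult_nth[of "xpoly p"] by (simp add: xpoly_def xser_def)
  then have "(xpoly p * G) $ n $ s = (\<Sum>i=0..n. coeff p i * G $ (n-i) $ s)"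
    by (simp add: fps_sum_nth)
  then show "col (xpoly p * G) s $ n = (fps_of_poly p * col G s) $ n"
    by (simp add: fps_mult_nth[of "fps_of_poly p"])
qed

lemma col_X: "col (fps_X * G) s = fps_X * col G s"
  by (rule fps_ext) simp

lemma col_ihbar: "col (ihbar * G) s = (if s = 0 then 0 else fps_const \<i> * col G (s - 1))"
  by (rule fps_ext) (simp add: ihbar_def mult.assoc)

lemma col_deriv: "col (fps_deriv G) s = fps_deriv (col G s)"
  by (rule fps_ext) (simp add: fps_of_nat[symmetric] del: of_nat_add of_nat_Suc)

lemma col_shift: "col (fps_shift 1 G) s = fps_shift 1 (col G s)"
  by (rule fps_ext) simp

lemma col_const: "col (fps_const c) s = fps_const (c $ s)"
  by (rule fps_ext) (simp add: fps_nth_fps_const)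

lemma col_xser: "col (xser Ob) s = (if s = 0 then Ob else 0)"
  by (rule fps_ext) (simp add: xser_def fps_nth_fps_const)

lemma mod_hbar_col: "mod_hbar F = col F 0"
  by (simp add: mod_hbar_def col_def)

definition Lam :: "complex poly \<Rightarrow> complex fps fps \<Rightarrow> complex fps" where
  "Lam P F = Abs_fps (\<lambda>m. \<Sum>s\<le>m. gexp_avg P (col F s) $ (m - s))"

lemma Lam_nth: "Lam P F $ m = (\<Sum>s\<le>m. gexp_avg P (col F s) $ (m - s))"
  by (simp add: Lam_def)

lemma Lam_add: "\<forall>k<3. coeff P k = 0 \<Longrightarrow> Lam P (F + G) = Lam P F + Lam P G"
  by (rule fps_ext) (simp add: Lam_nth col_add gexp_avg_add sum.distrib)

lemma Lam_xser: "\<forall>k<3. coeff P k = 0 \<Longrightarrow> Lam P (xser Ob) = gexp_avg P Ob"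
proof (rule fps_ext)
  fix m assume P3: "\<forall>k<3. coeff P k = 0"
  have "Lam P (xser Ob) $ m = (\<Sum>s\<le>m. if s = 0 then gexp_avg P Ob $ m else 0)"
    unfolding Lam_nth col_xser by (intro sum.cong) (auto simp: gexp_avg_zero[OF P3])
  then show "Lam P (xser Ob) $ m = gexp_avg P Ob $ m" by simp
qed

lemma Lam_const: "\<forall>k<3. coeff P k = 0 \<Longrightarrow> Lam P (fps_const c) = c * gexp_avg P 1"
proof (rule fps_ext)
  fix m assume P3: "\<forall>k<3. coeff P k = 0"
  have "Lam P (fps_const c) $ m = (\<Sum>s\<le>m. c $ s * gexp_avg P 1 $ (m - s))"
    unfolding Lam_nth col_const using gexp_avg_const[OF P3, of _ 1] by simp
  then show "Lam P (fps_const c) $ m = (c * gexp_avg P 1) $ m"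
    by (simp add: fps_mult_nth atLeast0AtMost)
qed

lemma E_low:
  assumes P3: "\<forall>k<3. coeff P k = 0" and z: "\<forall>n\<le>6*t. G $ n = 0"
  shows "gexp_avg P G $ t = 0"
proof -
  have "gexp_avg P G $ t = Esum P (2*t) G t" by (rule gexp_avg_Esum[OF P3]) simp
  also have "\<dots> = 0" unfolding Esum_def
  proof (intro sum.neutral ballI)
    fix j assume j: "j \<in> {..2*t}"
    have "(fps_of_poly P ^ j * G) $ (2 * (t + j)) = 0"
      unfolding fps_mult_nth
      by (intro sum.neutral ballI) (use z j in auto)
    then show "\<i> ^ j / fact j * gauss (fps_of_poly P ^ j * G) $ (t + j) = 0"
      by (simp add: gauss_nth)
  qed
  finally show ?thesis .
qed

definition wt_ge :: "nat \<Rightarrow> complex fps fps \<Rightarrow> bool" where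
  "wt_ge N F \<longleftrightarrow> (\<forall>n s. n + 3*s < N \<longrightarrow> F $ n $ s = 0)"

lemma Lam_wt:
  assumes P3: "\<forall>k<3. coeff P k = 0" and w: "wt_ge N F" and m: "6*m < N"
  shows "Lam P F $ m = 0"
  unfolding Lam_nth
proof (intro sum.neutral ballI)
  fix s assume s: "s \<in> {..m}"
  show "gexp_avg P (col F s) $ (m - s) = 0"
    by (rule E_low[OF P3]) (use w m s in \<open>auto simp: wt_ge_def\<close>)
qed

lemma shift_sum:
  fixes f :: "nat \<Rightarrow> nat \<Rightarrow> complex"
  shows "(\<Sum>s\<le>m. (if m - s = 0 then 0 else f s (m - s - 1)) - (if s = 0 then 0 else f (s - 1) (m - s))) = 0"
proof (cases m)
  case 0 then show ?thesis by simp
next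
  case (Suc m')
  have 1: "(\<Sum>s\<le>m. (if m - s = 0 then 0 else f s (m - s - 1))) = (\<Sum>s\<le>m'. f s (m' - s))"
    unfolding Suc by (simp add: Suc_diff_le)
  have 2: "(\<Sum>s\<le>m. (if s = 0 then 0 else f (s - 1) (m - s))) = (\<Sum>s\<le>m'. f s (m' - s))"
    unfolding Suc by (subst sum.atMost_Suc_shift) simp
  show ?thesis using 1 2 by (simp add: sum_subtractf)
qed

definition Qop :: "complex poly \<Rightarrow> complex fps fps \<Rightarrow> complex fps fps" where
  "Qop P g = (fps_X + xpoly (pderiv P)) * g - ihbar * fps_deriv g"

lemma Lam_Qop:
  assumes P3: "\<forall>k<3. coeff P k = 0"
  shows "Lam P (Qop P g) = 0"
proof (rule fps_ext)
  fix m
  define f where "f s t = \<i> * gexp_avg P (fps_deriv (col g s)) $ t" for s t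
  have c: "col (Qop P g) s = (fps_X + fps_of_poly (pderiv P)) * col g s
       - (if s = 0 then 0 else fps_const \<i> * fps_deriv (col g (s - 1)))" for s
    by (simp add: Qop_def col_diff col_add distrib_right col_X col_xpoly col_ihbar col_deriv)
  have e: "gexp_avg P (col (Qop P g) s) $ (m - s) =
     (if m - s = 0 then 0 else f s (m - s - 1)) - (if s = 0 then 0 else f (s - 1) (m - s))" for s
    unfolding c gexp_avg_diff[OF P3] fps_sub_nth ibp[OF P3] f_def
    by (simp add: gexp_avg_const[OF P3] gexp_avg_zero[OF P3])
  show "Lam P (Qop P g) $ m = 0 $ m"
    unfolding Lam_nth e using shift_sum[of m f] by simp
qed



definition Top :: "complex poly \<Rightarrow> complex fps fps \<Rightarrow> complex fps fps" where
  "Top P a = - (xpoly (pderiv P) * fps_shift 1 a - ihbar * fps_deriv (fps_shift 1 a))"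

lemma mdK_eq: "mdK P w = (Top P (fst w), 0)"
  by (simp add: mdK_def delta_def Kop_def Top_def Let_def)

lemma fst_mdK_pow: "fst ((mdK P ^^ k) v) = (Top P ^^ k) (fst v)"
  by (induction k) (simp_all add: mdK_eq)

lemma Top_zero: "Top P 0 = 0"
  by (simp add: Top_def)

lemma Top_pow_zero: "(Top P ^^ k) 0 = 0"
  by (induction k) (simp_all add: Top_zero)

lemma X_shift: "fps_X * fps_shift 1 (a::complex fps fps) = a - fps_const (a $ 0)"
proof (rule fps_ext)
  fix n
  show "(fps_X * fps_shift 1 a) $ n = (a - fps_const (a $ 0)) $ n"
    by (cases n) simp_all
qed

lemma decomp: "a = fps_const (a $ 0) + Qop P (fps_shift 1 a) + Top P a"
proof -
  have "Qop P (fps_shift 1 a) + Top P a = fps_X * fps_shift 1 a"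
    by (simp add: Qop_def Top_def algebra_simps)
  then show ?thesis by (simp only: X_shift add.assoc) simp
qed

lemma Lam_step:
  assumes P3: "\<forall>k<3. coeff P k = 0"
  shows "Lam P a = a $ 0 * gexp_avg P 1 + Lam P (Top P a)"
proof -
  have "Lam P a = Lam P (fps_const (a $ 0) + Qop P (fps_shift 1 a) + Top P a)"
    using decomp[of a P] by simp
  also have "\<dots> = a $ 0 * gexp_avg P 1 + Lam P (Top P a)"
    by (simp add: Lam_add[OF P3] Lam_const[OF P3] Lam_Qop[OF P3])
  finally show ?thesis .
qed

lemma Lam_iter:
  assumes P3: "\<forall>k<3. coeff P k = 0"
  shows "Lam P a = (\<Sum>k<N. (Top P ^^ k) a $ 0) * gexp_avg P 1 + Lam P ((Top P ^^ N) a)"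
proof (induction N)
  case 0 then show ?case by simp
next
  case (Suc N)
  then show ?case
    using Lam_step[OF P3, of "(Top P ^^ N) a"] by (simp add: distrib_right)
qed

lemma col_Top: "col (Top P a) s = - (fps_of_poly (pderiv P) * fps_shift 1 (col a s)
     - (if s = 0 then 0 else fps_const \<i> * fps_deriv (fps_shift 1 (col a (s - 1)))))"
  by (simp only: Top_def col_minus col_diff col_xpoly col_ihbar col_deriv col_shift)

lemma wt_Top:
  assumes P3: "\<forall>k<3. coeff P k = 0" and w: "wt_ge N a"
  shows "wt_ge (Suc N) (Top P a)"
  unfolding wt_ge_def
proof (intro allI impI)
  fix n s assume ns: "n + 3*s < Suc N"
  have b: "\<forall>k<N - 3*s - 1. fps_shift 1 (col a s) $ k = 0"
    using w by (auto simp: wt_ge_def)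
  have t1: "(fps_of_poly (pderiv P) * fps_shift 1 (col a s)) $ n = 0"
    by (rule mzb[OF Pd_low[OF P3] b]) (use ns in arith)
  have t2: "(if s = 0 then 0 else fps_const \<i> * fps_deriv (fps_shift 1 (col a (s - 1)))) $ n = 0"
  proof (cases s)
    case (Suc s')
    have "a $ (n + 2) $ s' = 0" using w ns Suc by (auto simp: wt_ge_def)
    then show ?thesis using Suc by (simp add: numeral_2_eq_2)
  qed simp
  have "Top P a $ n $ s = col (Top P a) s $ n" by simp
  also have "\<dots> = 0" unfolding col_Top using t1 t2 by simp
  finally show "Top P a $ n $ s = 0" .
qed

lemma wt_iter:
  assumes P3: "\<forall>k<3. coeff P k = 0"
  shows "wt_ge k ((Top P ^^ k) a)"
proof (induction k)
  case 0 then show ?case by (simp add: wt_ge_def)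
next
  case (Suc k) then show ?case using wt_Top[OF P3] by simp
qed

lemma fsum1_nth:
  assumes "\<forall>k\<ge>N. a k $ m = 0"
  shows "fsum1 a $ m = (\<Sum>k<N. a k $ m)"
proof -
  have "fsum1 a $ m = (\<Sum>k | a k $ m \<noteq> 0. a k $ m)" by (simp add: fsum1_def)
  also have "\<dots> = (\<Sum>k<N. a k $ m)"
    by (rule sum.mono_neutral_left) (use assms not_le in auto)
  finally show ?thesis .
qed

lemma fsum2_nth:
  assumes "\<forall>k\<ge>N. a k $ n $ m = 0"
  shows "fsum2 a $ n $ m = (\<Sum>k<N. a k $ n $ m)"
proof -
  have "fsum2 a $ n $ m = (\<Sum>k | a k $ n $ m \<noteq> 0. a k $ n $ m)" by (simp add: fsum2_def)
  also have "\<dots> = (\<Sum>k<N. a k $ n $ m)"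
    by (rule sum.mono_neutral_left) (use assms not_le in auto)
  finally show ?thesis .
qed

lemma fsum2_zero: "fsum2 (\<lambda>k. 0) = 0"
  by (simp add: fsum2_def fps_eq_iff)

lemma trunc_mult:
  fixes F G B :: "'a::comm_semiring_0 fps"
  assumes "\<forall>i\<le>m. F $ i = G $ i"
  shows "(F * B) $ m = (G * B) $ m"
  unfolding fps_mult_nth by (intro sum.cong) (use assms in auto)



lemma summable2_I:
  assumes "\<And>n m. \<exists>N. \<forall>k\<ge>N. a k $ n $ m = 0"
  shows "summable2 a"
  unfolding summable2_def
proof (intro allI)
  fix n m
  obtain N where "\<forall>k\<ge>N. a k $ n $ m = 0" using assms by blast
  then have "{k. a k $ n $ m \<noteq> 0} \<subseteq> {..<N}" using not_le by auto
  then show "finite {k. a k $ n $ m \<noteq> 0}" using finite_subset by blast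
qed

lemma summable1_I:
  assumes "\<And>m. \<exists>N. \<forall>k\<ge>N. a k $ m = 0"
  shows "summable1 a"
  unfolding summable1_def
proof (intro allI)
  fix m
  obtain N where "\<forall>k\<ge>N. a k $ m = 0" using assms by blast
  then have "{k. a k $ m \<noteq> 0} \<subseteq> {..<N}" using not_le by auto
  then show "finite {k. a k $ m \<noteq> 0}" using finite_subset by blast
qed

lemma fsum2_single:
  assumes "\<forall>k\<ge>1. a k = 0"
  shows "fsum2 a = a 0"
proof -
  have "fsum2 a $ n $ m = a 0 $ n $ m" for n m
    using fsum2_nth[of 1 a n m] assms by simp
  then show ?thesis by (simp add: fps_eq_iff)
qed

lemma iint_eq: "iint_series P c k = (if k = 0 then iop c else (0, 0))"
proof (induction k)
  case 0 then show ?case by (simp add: iint_series_def)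
next
  case (Suc k)
  have "mKd P w = (0, 0)" if "snd w = 0" for w
    using that by (simp add: mKd_def delta_def Kop_def Let_def)
  then show ?case using Suc by (simp add: iint_series_def iop_def)
qed

lemma part1: "sf_summable (iint_series P c) \<and> sf_sum (iint_series P c) = iop c"
proof -
  have s1: "summable2 (\<lambda>k. fst (iint_series P c k))"
    by (rule summable2_I) (rule exI[of _ 1], simp add: iint_eq)
  have s2: "summable2 (\<lambda>k. snd (iint_series P c k))"
    by (rule summable2_I) (rule exI[of _ 1], simp add: iint_eq)
  have f1: "fsum2 (\<lambda>k. fst (iint_series P c k)) = fst (iop c)"
    by (subst fsum2_single) (simp_all add: iint_eq)
  have f2: "fsum2 (\<lambda>k. snd (iint_series P c k)) = snd (iop c)"
    by (subst fsum2_single) (simp_all add: iint_eq)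
  show ?thesis using s1 s2 f1 f2 by (simp add: sf_summable_def sf_sum_def)
qed

lemma pint_eq: "pint_series P v k = (Top P ^^ k) (fst v) $ 0"
  by (simp add: pint_series_def pop_def fst_mdK_pow)

lemma Kint_eq: "Kint_series P v k = (0, fps_shift 1 ((Top P ^^ k) (fst v)))"
  by (simp add: Kint_series_def Kop_def fst_mdK_pow)

lemma part2:
  assumes P3: "\<forall>k<3. coeff P k = 0"
  shows "summable1 (pint_series P v)"
proof (rule summable1_I)
  fix m
  show "\<exists>N. \<forall>k\<ge>N. pint_series P v k $ m = 0"
    by (rule exI[of _ "Suc (3*m)"]) (use wt_iter[OF P3] in \<open>auto simp: pint_eq wt_ge_def\<close>)
qed

lemma part3:
  assumes P3: "\<forall>k<3. coeff P k = 0"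
  shows "sf_summable (Kint_series P v)"
  unfolding sf_summable_def
proof
  show "summable2 (\<lambda>k. fst (Kint_series P v k))"
    by (rule summable2_I) (simp add: Kint_eq)
  show "summable2 (\<lambda>k. snd (Kint_series P v k))"
  proof (rule summable2_I)
    fix n m
    show "\<exists>N. \<forall>k\<ge>N. snd (Kint_series P v k) $ n $ m = 0"
      by (rule exI[of _ "n + 2 + 3*m"]) (use wt_iter[OF P3] in \<open>auto simp: Kint_eq wt_ge_def\<close>)
  qed
qed

lemma part4:
  assumes P3: "\<forall>k<3. coeff P k = 0"
  shows "gexp_summable P Ob \<and> (\<forall>m<0. gexp_coeff P Ob m = 0)"
proof
  have sub: "{j. gexp_term P Ob j m \<noteq> 0} \<subseteq> {j. int j \<le> 2*m}" for m
    using gexp_term_zero[OF P3] by (force simp: not_le)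
  have fin: "finite {j. int j \<le> 2*m}" for m
    by (rule finite_subset[of _ "{..nat (2*m)}"]) auto
  show "gexp_summable P Ob"
    unfolding gexp_summable_def using sub fin finite_subset by blast
  show "\<forall>m<0. gexp_coeff P Ob m = 0"
  proof (intro allI impI)
    fix m :: int assume "m < 0"
    then have "{j. gexp_term P Ob j m \<noteq> 0} = {}" using sub[of m] by auto
    then show "gexp_coeff P Ob m = 0" by (simp add: gexp_coeff_def)
  qed
qed

lemma part6: "sf_sum (Kint_series P (0, f)) = (0, 0)"
  by (simp add: sf_sum_def Kint_eq Top_pow_zero fsum2_zero)

lemma A0: "\<forall>k<3. coeff P k = 0 \<Longrightarrow> gexp_avg P 1 $ 0 = 1"
  by (simp add: gexp_avg_Esum[where J=0] Esum_def gauss_nth)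

lemma part5:
  assumes P3: "\<forall>k<3. coeff P k = 0"
  shows "fsum1 (pint_series P (xser Ob, 0)) = gexp_avg P Ob / gexp_avg P 1"
proof -
  define a where "a = xser Ob"
  define A where "A = gexp_avg P 1"
  define \<pi> where "\<pi> = fsum1 (pint_series P (xser Ob, 0))"
  have pk: "pint_series P (xser Ob, 0) k = (Top P ^^ k) a $ 0" for k
    by (simp add: pint_eq a_def)
  have \<pi>n: "\<pi> $ q = (\<Sum>k<N. (Top P ^^ k) a $ 0 $ q)" if "3*q < N" for q N
  proof -
    have "\<forall>k\<ge>N. pint_series P (xser Ob, 0) k $ q = 0"
      using wt_iter[OF P3, of _ a] that by (auto simp: pk wt_ge_def)
    then show ?thesis unfolding \<pi>_def by (simp add: fsum1_nth pk)
  qed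
  have main: "gexp_avg P Ob = \<pi> * A"
  proof (rule fps_ext)
    fix m
    define N where "N = Suc (6*m)"
    have "gexp_avg P Ob $ m = Lam P a $ m" by (simp add: a_def Lam_xser[OF P3])
    also have "\<dots> = ((\<Sum>k<N. (Top P ^^ k) a $ 0) * A) $ m + Lam P ((Top P ^^ N) a) $ m"
      using Lam_iter[OF P3, of a N] by (simp add: A_def)
    also have "Lam P ((Top P ^^ N) a) $ m = 0"
      by (rule Lam_wt[OF P3 wt_iter[OF P3]]) (simp add: N_def)
    also have "((\<Sum>k<N. (Top P ^^ k) a $ 0) * A) $ m = (\<pi> * A) $ m"
    proof (rule trunc_mult, intro allI impI)
      fix i assume "i \<le> m"
      then have "3*i < N" by (simp add: N_def)
      then show "(\<Sum>k<N. (Top P ^^ k) a $ 0) $ i = \<pi> $ i"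
        by (simp only: fps_sum_nth \<pi>n)
    qed
    finally show "gexp_avg P Ob $ m = (\<pi> * A) $ m" by simp
  qed
  have "A \<noteq> 0" using A0[OF P3] by (auto simp: A_def)
  then have "gexp_avg P Ob / A = \<pi>" using main by simp
  then show ?thesis by (simp add: A_def \<pi>_def)
qed

lemma X_shift1: "fps_X * fps_shift 1 (a::complex fps) = a - fps_const (a $ 0)"
proof (rule fps_ext)
  fix n
  show "(fps_X * fps_shift 1 a) $ n = (a - fps_const (a $ 0)) $ n"
    by (cases n) simp_all
qed

lemma part7:
  assumes P3: "\<forall>k<3. coeff P k = 0"
  shows "mod_hbar (fst (sf_sum (Kint_series P (xser Ob, 0)))) = 0
          \<and> mod_hbar (snd (sf_sum (Kint_series P (xser Ob, 0))))
              = (Ob - fps_const (Ob $ 0)) / fps_of_poly ([:0, 1:] + pderiv P)"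
proof
  show "mod_hbar (fst (sf_sum (Kint_series P (xser Ob, 0)))) = 0"
    by (simp add: sf_sum_def Kint_eq fsum2_zero mod_hbar_def fps_eq_iff)
  define a where "a = xser Ob"
  define Pd where "Pd = fps_of_poly (pderiv P)"
  define B where "B = fps_X + Pd"
  define u where "u k = col ((Top P ^^ k) a) 0" for k
  define Y where "Y = mod_hbar (snd (sf_sum (Kint_series P (xser Ob, 0))))"
  have u0: "u 0 = Ob" by (simp add: u_def a_def col_xser)
  have uS: "u (Suc k) = - (Pd * fps_shift 1 (u k))" for k
    by (simp add: u_def col_Top Pd_def)
  have ulow: "u k $ n = 0" if "n < k" for k n
    using wt_iter[OF P3, of k a] that by (simp add: u_def wt_ge_def)
  have Yn: "Y $ i = (\<Sum>k<N. fps_shift 1 (u k) $ i)" if "i + 2 \<le> N" for i N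
  proof -
    have "Y $ i = fsum2 (\<lambda>k. fps_shift 1 ((Top P ^^ k) a)) $ i $ 0"
      by (simp add: Y_def sf_sum_def Kint_eq mod_hbar_def a_def)
    also have "\<dots> = (\<Sum>k<N. fps_shift 1 ((Top P ^^ k) a) $ i $ 0)"
      by (rule fsum2_nth) (use wt_iter[OF P3, of _ a] that in \<open>auto simp: wt_ge_def\<close>)
    finally show ?thesis by (simp add: u_def)
  qed
  have tele: "(\<Sum>k<Suc N. fps_shift 1 (u k)) * B = Ob - fps_const (Ob $ 0) - u (Suc N)" for N
  proof (induction N)
    case 0
    show ?case using X_shift1[of Ob] uS[of 0] u0 by (simp add: B_def algebra_simps)
  next
    case (Suc N)
    have "fps_shift 1 (u (Suc N)) * B = u (Suc N) - u (Suc (Suc N))"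
      using X_shift1[of "u (Suc N)"] uS[of "Suc N"] ulow[of 0 "Suc N"]
      by (simp add: B_def algebra_simps)
    then show ?case using Suc.IH by (simp add: distrib_right)
  qed
  have YB: "Y * B = Ob - fps_const (Ob $ 0)"
  proof (rule fps_ext)
    fix n
    have "(Y * B) $ n = ((\<Sum>k<Suc (Suc n). fps_shift 1 (u k)) * B) $ n"
    proof (rule trunc_mult, intro allI impI)
      fix i assume "i \<le> n"
      then have "i + 2 \<le> Suc (Suc n)" by simp
      then show "Y $ i = (\<Sum>k<Suc (Suc n). fps_shift 1 (u k)) $ i"
        by (simp only: fps_sum_nth Yn)
    qed
    also have "\<dots> = (Ob - fps_const (Ob $ 0)) $ n"
      using tele[of "Suc n"] ulow[of n "Suc (Suc n)"] by simp
    finally show "(Y * B) $ n = (Ob - fps_const (Ob $ 0)) $ n" .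
  qed
  have Beq: "fps_of_poly ([:0, 1:] + pderiv P) = B"
    by (simp add: B_def Pd_def fps_of_poly_add fps_of_poly_pCons)
  have "B $ 1 = 1" using Pd_low[OF P3] by (simp add: B_def Pd_def)
  then have "B \<noteq> 0" by auto
  then have "(Ob - fps_const (Ob $ 0)) / B = Y" using YB by (metis nonzero_mult_div_cancel_right)
  then show "mod_hbar (snd (sf_sum (Kint_series P (xser Ob, 0))))
              = (Ob - fps_const (Ob $ 0)) / fps_of_poly ([:0, 1:] + pderiv P)"
    by (simp add: Beq Y_def)
qed


theorem mainTheorem10:
  fixes P :: "complex poly"
  assumes "\<forall>k<3. coeff P k = 0"
  shows
   "(\<forall>c. sf_summable (iint_series P c) \<and> sf_sum (iint_series P c) = iop c)
    \<and> (\<forall>v. summable1 (pint_series P v))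
    \<and> (\<forall>v. sf_summable (Kint_series P v))
    \<and> (\<forall>Ob. gexp_summable P Ob \<and> (\<forall>m<0. gexp_coeff P Ob m = 0))
    \<and> (\<forall>Ob. fsum1 (pint_series P (xser Ob, 0)) = gexp_avg P Ob / gexp_avg P 1)
    \<and> (\<forall>f. sf_sum (Kint_series P (0, f)) = (0, 0))
    \<and> (\<forall>Ob. mod_hbar (fst (sf_sum (Kint_series P (xser Ob, 0)))) = 0
          \<and> mod_hbar (snd (sf_sum (Kint_series P (xser Ob, 0))))
              = (Ob - fps_const (Ob $ 0)) / fps_of_poly ([:0, 1:] + pderiv P))"
  using part1 part2[OF assms] part3[OF assms] part4[OF assms] part5[OF assms] part6 part7[OF assms]
  by blast

end
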